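(* Let $\mathcal P=\{P_1,\dots,P_K\}$ be a finite collection of prototiles, with $P_k=\{0=p_{k,1}<p_{k,2}<\dots<p_{k,\ell_k}\}$. Then the subscripted tiling system $\widetilde T(\mathcal P)$ is a shift of finite type. More precisely, if $L$ is the maximal length $p_{k,\ell_k}+1$ of a prototile in $\mathcal P$, then a point $x\in\prod_{i\in\mathbb Z}\{(k,\ell):1\le k\le K,1\le \ell\le \ell_k\}$ belongs to $\widetilde T(\mathcal P)$ whenever every block of $L$ consecutive symbols occurring in $x$ occurs in some point of $\widetilde T(\mathcal P)$.
   Context: A prototile is a finite nonempty subset of $\mathbb Z$ with minimum $0$. The subscripted tiling system $\widetilde T(\mathcal P)$ is the set of points $x\in\prod_{i\in\mathbb Z}\{(k,\ell):1\le k\le K,\ 1\le\ell\le\ell_k\}$ such that there is a tiling $\mathbb Z=\bigcup_j(t_j+P_{k_j})$ of $\mathbb Z$ as a disjoint union of translates of prototiles with the property that for every $i$ there are $j$ and $\ell$ with $i\in t_j+P_{k_j}$ (namely $i=t_j+p_{k_j,\ell}$) and $x_i=(k_j,\ell)$. Equivalently, $x\in\widetilde T(\mathcal P)$ iff for every $i$, $x_i=(k,\ell)$ and $1\le\ell'\le\ell_k$ imply $x_{i+p_{k,\ell'}-p_{k,\ell}}=(k,\ell')$. It is considered with the shift $(\sigma x)_i=x_{i+1}$. *)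

theory Defs
  imports Main
begin

definition prototiles :: "nat \<Rightarrow> (nat \<Rightarrow> int set) \<Rightarrow> bool" where
  "prototiles K P \<longleftrightarrow> (\<forall>k\<in>{1..K}. finite (P k) \<and> P k \<noteq> {} \<and> Min (P k) = 0)"

definition ell :: "(nat \<Rightarrow> int set) \<Rightarrow> nat \<Rightarrow> nat" where
  "ell P k = card (P k)"

definition pt :: "(nat \<Rightarrow> int set) \<Rightarrow> nat \<Rightarrow> nat \<Rightarrow> int" where
  "pt P k l = sorted_list_of_set (P k) ! (l - 1)"

definition alphabet :: "nat \<Rightarrow> (nat \<Rightarrow> int set) \<Rightarrow> (nat \<times> nat) set" where
  "alphabet K P = {(k, l). 1 \<le> k \<and> k \<le> K \<and> 1 \<le> l \<and> l \<le> ell P k}"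

text \<open>A tiling of Z: a set of tiles (t,k), meaning the translate t + P k, such that every
  integer lies in exactly one tile (Z is the disjoint union of the translates).\<close>
definition is_tiling :: "nat \<Rightarrow> (nat \<Rightarrow> int set) \<Rightarrow> (int \<times> nat) set \<Rightarrow> bool" where
  "is_tiling K P Tiles \<longleftrightarrow> Tiles \<subseteq> UNIV \<times> {1..K} \<and>
     (\<forall>i::int. \<exists>!tk. tk \<in> Tiles \<and> i \<in> (\<lambda>p. fst tk + p) ` P (snd tk))"

definition subT :: "nat \<Rightarrow> (nat \<Rightarrow> int set) \<Rightarrow> (int \<Rightarrow> nat \<times> nat) set" where
  "subT K P = {x. (\<forall>i. x i \<in> alphabet K P) \<and>
     (\<exists>Tiles. is_tiling K P Tiles \<and>
        (\<forall>i. \<exists>t k l. (t, k) \<in> Tiles \<and> 1 \<le> l \<and> l \<le> ell P k \<and>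
                     i = t + pt P k l \<and> x i = (k, l)))}"

definition maxlen :: "nat \<Rightarrow> (nat \<Rightarrow> int set) \<Rightarrow> int" where
  "maxlen K P = Max ((\<lambda>k. Max (P k) + 1) ` {1..K})"

definition block_occurs :: "(int \<Rightarrow> 'a) \<Rightarrow> int \<Rightarrow> int \<Rightarrow> (int \<Rightarrow> 'a) \<Rightarrow> bool" where
  "block_occurs x i n y \<longleftrightarrow> (\<exists>j. \<forall>m\<in>{0..<n}. y (j + m) = x (i + m))"

end

theory Submission
  imports Defs
begin

lemma pt_in: "finite (P k) \<Longrightarrow> 1 \<le> l \<Longrightarrow> l \<le> ell P k \<Longrightarrow> pt P k l \<in> P k"
  unfolding pt_def ell_def
  by (metis One_nat_def Suc_le_eq Suc_pred length_sorted_list_of_set nth_mem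
      set_sorted_list_of_set less_Suc_eq_le)

lemma pt_surj: "finite (P k) \<Longrightarrow> p \<in> P k \<Longrightarrow> \<exists>l. 1 \<le> l \<and> l \<le> ell P k \<and> pt P k l = p"
proof -
  assume f: "finite (P k)" and p: "p \<in> P k"
  then have "p \<in> set (sorted_list_of_set (P k))" by simp
  then obtain n where n: "n < length (sorted_list_of_set (P k))" "sorted_list_of_set (P k) ! n = p"
    by (auto simp: in_set_conv_nth)
  show ?thesis
    by (rule exI[of _ "Suc n"]) (use n f in \<open>auto simp: pt_def ell_def\<close>)
qed

lemma pt_inj: "finite (P k) \<Longrightarrow> 1 \<le> l \<Longrightarrow> l \<le> ell P k \<Longrightarrow> 1 \<le> l' \<Longrightarrow> l' \<le> ell P k
  \<Longrightarrow> pt P k l = pt P k l' \<Longrightarrow> l = l'"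
  unfolding pt_def ell_def
  using nth_eq_iff_index_eq[OF distinct_sorted_list_of_set[of "P k"], of "l - 1" "l' - 1"]
  by (simp; linarith)

theorem mainTheorem3:
  fixes K :: nat and P :: "nat \<Rightarrow> int set" and x :: "int \<Rightarrow> nat \<times> nat"
  assumes "prototiles K P"
    and "\<forall>i. x i \<in> alphabet K P"
    and "\<forall>i. \<exists>y\<in>subT K P. block_occurs x i (maxlen K P) y"
  shows "x \<in> subT K P"
proof -
  note proto = assms(1)[unfolded prototiles_def]
  have alph: "1 \<le> fst (x i) \<and> fst (x i) \<le> K \<and> 1 \<le> snd (x i) \<and> snd (x i) \<le> ell P (fst (x i))" for i
    using assms(2)[rule_format, of i] by (cases "x i") (auto simp: alphabet_def)
  have ptrange: "0 \<le> pt P k l \<and> pt P k l < maxlen K P"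
    if k: "k \<in> {1..K}" and l: "1 \<le> l" "l \<le> ell P k" for k l
  proof -
    have f: "finite (P k)" "P k \<noteq> {}" "Min (P k) = 0" using proto k by auto
    have m: "pt P k l \<in> P k" using pt_in[OF f(1) l] .
    have "0 \<le> pt P k l" using Min_le[OF f(1) m] f(3) by simp
    moreover have "pt P k l \<le> Max (P k)" using Max_ge[OF f(1) m] .
    moreover have "Max (P k) + 1 \<le> maxlen K P"
      unfolding maxlen_def using k by (intro Max_ge) auto
    ultimately show ?thesis by simp
  qed
  have local: "x (j - pt P k l + pt P k l') = (k, l')"
    if xj: "x j = (k, l)" and l': "1 \<le> l'" "l' \<le> ell P k" for j k l l'
  proof -
    have k: "k \<in> {1..K}" and l: "1 \<le> l" "l \<le> ell P k" using alph[of j] xj by auto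
    have fk: "finite (P k)" using proto k by auto
    define t where "t = j - pt P k l"
    obtain y where y: "y \<in> subT K P" and bo: "block_occurs x t (maxlen K P) y"
      using assms(3) by blast
    obtain j0 where j0: "\<And>m. m \<in> {0..<maxlen K P} \<Longrightarrow> y (j0 + m) = x (t + m)"
      using bo unfolding block_occurs_def by blast
    obtain Tiles where til: "is_tiling K P Tiles" and
      cov: "\<And>i. \<exists>t k l. (t, k) \<in> Tiles \<and> 1 \<le> l \<and> l \<le> ell P k \<and> i = t + pt P k l \<and> y i = (k, l)"
      using y unfolding subT_def by blast
    have y1: "y (j0 + pt P k l) = (k, l)"
      using j0[of "pt P k l"] ptrange[OF k l] xj unfolding t_def by simp
    obtain t0 k0 l0 where h0: "(t0, k0) \<in> Tiles" "1 \<le> l0" "l0 \<le> ell P k0"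
      "j0 + pt P k l = t0 + pt P k0 l0" "y (j0 + pt P k l) = (k0, l0)"
      using cov[of "j0 + pt P k l"] by blast
    have "k0 = k" "l0 = l" using h0(5) y1 by auto
    then have t0: "t0 = j0" using h0(4) by simp
    have T0: "(j0, k) \<in> Tiles" using h0(1) t0 \<open>k0 = k\<close> by simp
    obtain t1 k1 l1 where h1: "(t1, k1) \<in> Tiles" "1 \<le> l1" "l1 \<le> ell P k1"
      "j0 + pt P k l' = t1 + pt P k1 l1" "y (j0 + pt P k l') = (k1, l1)"
      using cov[of "j0 + pt P k l'"] by blast
    have k1: "k1 \<in> {1..K}" using til h1(1) unfolding is_tiling_def by auto
    have fk1: "finite (P k1)" using proto k1 by auto
    have uniq: "\<exists>!tk. tk \<in> Tiles \<and> j0 + pt P k l' \<in> (\<lambda>p. fst tk + p) ` P (snd tk)"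
      using til unfolding is_tiling_def by blast
    have m1: "j0 + pt P k l' \<in> (\<lambda>p. fst (j0, k) + p) ` P (snd (j0, k))"
      using pt_in[OF fk l'] by auto
    have m2: "j0 + pt P k l' \<in> (\<lambda>p. fst (t1, k1) + p) ` P (snd (t1, k1))"
      using pt_in[OF fk1 h1(2,3)] h1(4) by auto
    have "(j0, k) = (t1, k1)" using uniq T0 h1(1) m1 m2 by blast
    then have e: "t1 = j0" "k1 = k" by auto
    then have "pt P k l1 = pt P k l'" using h1(4) by simp
    then have "l1 = l'" using pt_inj[OF fk _ _ l'] h1(2,3) e by simp
    then have "y (j0 + pt P k l') = (k, l')" using h1(5) e by simp
    moreover have "y (j0 + pt P k l') = x (t + pt P k l')"
      using j0[of "pt P k l'"] ptrange[OF k l'] by simp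
    ultimately show ?thesis unfolding t_def by simp
  qed
  define Tiles where "Tiles = {(t, k). \<exists>i l. x i = (k, l) \<and> t = i - pt P k l}"
  have "is_tiling K P Tiles"
    unfolding is_tiling_def
  proof (intro conjI allI)
    show "Tiles \<subseteq> UNIV \<times> {1..K}" 
    proof
      fix z assume "z \<in> Tiles"
      then obtain i k l where "x i = (k, l)" "z = (i - pt P k l, k)" unfolding Tiles_def by auto
      then show "z \<in> UNIV \<times> {1..K}" using alph[of i] by auto
    qed
  next
    fix i
    obtain k l where xi: "x i = (k, l)" by (cases "x i")
    have k: "k \<in> {1..K}" and l: "1 \<le> l" "l \<le> ell P k" using alph[of i] xi by auto
    have fk: "finite (P k)" using proto k by auto
    show "\<exists>!tk. tk \<in> Tiles \<and> i \<in> (\<lambda>p. fst tk + p) ` P (snd tk)"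
    proof (rule ex1I[of _ "(i - pt P k l, k)"])
      show "(i - pt P k l, k) \<in> Tiles \<and> i \<in> (\<lambda>p. fst (i - pt P k l, k) + p) ` P (snd (i - pt P k l, k))"
        using xi pt_in[OF fk l] unfolding Tiles_def by force
    next
      fix tk assume a: "tk \<in> Tiles \<and> i \<in> (\<lambda>p. fst tk + p) ` P (snd tk)"
      obtain t k' where tk: "tk = (t, k')" by (cases tk)
      obtain j l' where jl: "x j = (k', l')" "t = j - pt P k' l'" using a tk unfolding Tiles_def by auto
      have k': "k' \<in> {1..K}" using alph[of j] jl by auto
      have fk': "finite (P k')" using proto k' by auto
      obtain p where p: "p \<in> P k'" "i = t + p" using a tk by auto
      obtain l2 where l2: "1 \<le> l2" "l2 \<le> ell P k'" "pt P k' l2 = p" using pt_surj[of P k', OF fk' p(1)] by blast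
      have "x i = (k', l2)" using local[OF jl(1) l2(1,2)] jl(2) p(2) l2(3) by simp
      then have "k' = k" "l2 = l" using xi by auto
      then show "tk = (i - pt P k l, k)" using tk p l2 by simp
    qed
  qed
  moreover have "\<exists>t k l. (t, k) \<in> Tiles \<and> 1 \<le> l \<and> l \<le> ell P k \<and> i = t + pt P k l \<and> x i = (k, l)" for i
  proof -
    obtain k l where xi: "x i = (k, l)" by (cases "x i")
    have l: "1 \<le> l" "l \<le> ell P k" using alph[of i] xi by auto
    show ?thesis
      by (rule exI[of _ "i - pt P k l"], rule exI[of _ k], rule exI[of _ l])
        (use xi l in \<open>auto simp: Tiles_def\<close>)
  qed
  ultimately show ?thesis unfolding subT_def using assms(2) by blast
qed

end
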